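(* There exists a constant $c>0$ such that for all sufficiently large $n$ and all $r\ge0$, $0<\epsilon\le 1$, $R>\epsilon$, with probability at least $1-1/n$ the flooding time of the stationary geometric-MEG $\mathcal{G}(n,r,R,\epsilon)$ is at least $c\,\frac{\sqrt n}{R+r}$.
   Context: $L_{n,\epsilon}=\{(i\epsilon,j\epsilon): i,j\in\mathbb{N},\ i,j\le\sqrt n/\epsilon\}$; $\Gamma(\mathbf{x})=\{\mathbf{y}\in L_{n,\epsilon}:d(\mathbf{x},\mathbf{y})\le r\}$ with $d$ Euclidean distance. Each node $i\in[n]$ has position $P_{i,t}\in L_{n,\epsilon}$ evolving independently as a Markov chain that moves from $\mathbf{x}$ to a uniform random point of $\Gamma(\mathbf{x})$. The geometric-MEG $\mathcal{G}(n,r,R,\epsilon)=\{G_t\}$ has $G_t=([n],E_t)$, $E_t=\{\{i,j\}: d(P_{i,t},P_{j,t})\le R\}$. It is stationary when the initial positions are independent with law $\pi(\mathbf{x})=|\Gamma(\mathbf{x})|/\sum_{\mathbf{y}}|\Gamma(\mathbf{y})|$. Flooding from source $s$: $I_0=\{s\}$, $I_{t+1}=I_t\cup N_t(I_t)$, where $N_t(I)$ is the set of nodes outside $I$ adjacent in $G_t$ to a node of $I$; $T(s)$ is the first $t$ with $I_t=[n]$, and the flooding time is $\max_s T(s)$. *)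

theory Defs
  imports "HOL-Probability.Probability"
begin

type_synonym point = "real \<times> real"

definition edist :: "point \<Rightarrow> point \<Rightarrow> real" where
  "edist x y = sqrt ((fst x - fst y)^2 + (snd x - snd y)^2)"

definition grid :: "nat \<Rightarrow> real \<Rightarrow> point set" where
  "grid n \<epsilon> = {(real i * \<epsilon>, real j * \<epsilon>) | i j :: nat.
      real i \<le> sqrt (real n) / \<epsilon> \<and> real j \<le> sqrt (real n) / \<epsilon>}"

definition Gamma :: "nat \<Rightarrow> real \<Rightarrow> real \<Rightarrow> point \<Rightarrow> point set" where
  "Gamma n \<epsilon> r x = {y \<in> grid n \<epsilon>. edist x y \<le> r}"

definition stat_pi :: "nat \<Rightarrow> real \<Rightarrow> real \<Rightarrow> point pmf" where
  "stat_pi n \<epsilon> r = embed_pmf (\<lambda>x. if x \<in> grid n \<epsilon>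
      then real (card (Gamma n \<epsilon> r x)) / (\<Sum>y\<in>grid n \<epsilon>. real (card (Gamma n \<epsilon> r y)))
      else 0)"

definition step_pmf :: "nat \<Rightarrow> real \<Rightarrow> real \<Rightarrow> point \<Rightarrow> point pmf" where
  "step_pmf n \<epsilon> r x = pmf_of_set (Gamma n \<epsilon> r x)"

fun traj :: "nat \<Rightarrow> real \<Rightarrow> real \<Rightarrow> nat \<Rightarrow> point list pmf" where
  "traj n \<epsilon> r 0 = map_pmf (\<lambda>x. [x]) (stat_pi n \<epsilon> r)"
| "traj n \<epsilon> r (Suc m) = bind_pmf (traj n \<epsilon> r m)
      (\<lambda>xs. map_pmf (\<lambda>y. xs @ [y]) (step_pmf n \<epsilon> r (last xs)))"

definition meg_pmf :: "nat \<Rightarrow> real \<Rightarrow> real \<Rightarrow> nat \<Rightarrow> (nat \<Rightarrow> point list) pmf" where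
  "meg_pmf n \<epsilon> r m = Pi_pmf {..<n} [] (\<lambda>i. traj n \<epsilon> r m)"

text \<open>Positions P_{i,t}; after the horizon m the last position is held
  (irrelevant for events depending only on times below m).\<close>
definition positions :: "nat \<Rightarrow> (nat \<Rightarrow> point list) \<Rightarrow> nat \<Rightarrow> nat \<Rightarrow> point" where
  "positions m \<omega> i t = \<omega> i ! min t m"

definition adj :: "real \<Rightarrow> (nat \<Rightarrow> nat \<Rightarrow> point) \<Rightarrow> nat \<Rightarrow> nat \<Rightarrow> nat \<Rightarrow> bool" where
  "adj R pos t i j \<longleftrightarrow> i \<noteq> j \<and> edist (pos i t) (pos j t) \<le> R"

primrec flood_set :: "nat \<Rightarrow> real \<Rightarrow> (nat \<Rightarrow> nat \<Rightarrow> point) \<Rightarrow> nat \<Rightarrow> nat \<Rightarrow> nat set" where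
  "flood_set n R pos s 0 = {s}"
| "flood_set n R pos s (Suc t) = flood_set n R pos s t \<union>
     {j \<in> {..<n} - flood_set n R pos s t. \<exists>i\<in>flood_set n R pos s t. adj R pos t i j}"

definition flood_time_from :: "nat \<Rightarrow> real \<Rightarrow> (nat \<Rightarrow> nat \<Rightarrow> point) \<Rightarrow> nat \<Rightarrow> enat" where
  "flood_time_from n R pos s =
     (if \<exists>t. flood_set n R pos s t = {..<n}
      then enat (LEAST t. flood_set n R pos s t = {..<n}) else \<infinity>)"

definition flooding_time :: "nat \<Rightarrow> real \<Rightarrow> (nat \<Rightarrow> nat \<Rightarrow> point) \<Rightarrow> enat" where
  "flooding_time n R pos = (SUP s\<in>{..<n}. flood_time_from n R pos s)"

end

theory Submission
  imports Defs
begin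

lemma edist_dist: "edist x y = dist x y"
  by (cases x; cases y) (simp add: edist_def dist_Pair_Pair dist_real_def)

definition KK :: "nat \<Rightarrow> real \<Rightarrow> nat" where "KK n \<epsilon> = nat \<lfloor>sqrt (real n) / \<epsilon>\<rfloor>"

lemma grid_iff:
  assumes "\<epsilon> > 0"
  shows "x \<in> grid n \<epsilon> \<longleftrightarrow> (\<exists>i j. i \<le> KK n \<epsilon> \<and> j \<le> KK n \<epsilon> \<and> x = (real i * \<epsilon>, real j * \<epsilon>))"
proof -
  have *: "real i \<le> sqrt (real n) / \<epsilon> \<longleftrightarrow> i \<le> KK n \<epsilon>" for i
  proof -
    have "0 \<le> \<lfloor>sqrt (real n) / \<epsilon>\<rfloor>" using assms by simp
    then have "i \<le> KK n \<epsilon> \<longleftrightarrow> int i \<le> \<lfloor>sqrt (real n) / \<epsilon>\<rfloor>" unfolding KK_def by (simp add: le_nat_iff)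
    also have "\<dots> \<longleftrightarrow> real i \<le> sqrt (real n) / \<epsilon>" by (simp add: le_floor_iff)
    finally show ?thesis by simp
  qed
  show ?thesis unfolding grid_def using * by blast
qed

lemma grid_eq: "\<epsilon> > 0 \<Longrightarrow> grid n \<epsilon> = (\<lambda>(i,j). (real i * \<epsilon>, real j * \<epsilon>)) ` ({..KK n \<epsilon>} \<times> {..KK n \<epsilon>})"
  by (auto simp: grid_iff)

lemma finite_grid: "\<epsilon> > 0 \<Longrightarrow> finite (grid n \<epsilon>)"
  by (simp add: grid_eq)

lemma zero_grid: "\<epsilon> > 0 \<Longrightarrow> (0,0) \<in> grid n \<epsilon>"
  by (auto simp: grid_iff intro!: exI[of _ 0])

lemma finite_Gamma: "\<epsilon> > 0 \<Longrightarrow> finite (Gamma n \<epsilon> r x)"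
  unfolding Gamma_def using finite_grid by auto

lemma self_Gamma: "r \<ge> 0 \<Longrightarrow> x \<in> grid n \<epsilon> \<Longrightarrow> x \<in> Gamma n \<epsilon> r x"
  by (simp add: Gamma_def edist_dist)

lemma card_Gamma_pos: "\<epsilon> > 0 \<Longrightarrow> r \<ge> 0 \<Longrightarrow> x \<in> grid n \<epsilon> \<Longrightarrow> card (Gamma n \<epsilon> r x) > 0"
  using finite_Gamma self_Gamma by (metis card_gt_0_iff empty_iff)

definition ZZ where "ZZ n \<epsilon> r = (\<Sum>y\<in>grid n \<epsilon>. real (card (Gamma n \<epsilon> r y)))"

lemma ZZ_pos: "\<epsilon> > 0 \<Longrightarrow> r \<ge> 0 \<Longrightarrow> ZZ n \<epsilon> r > 0"
  unfolding ZZ_def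
  by (rule sum_pos2[OF finite_grid zero_grid]) (auto simp: card_Gamma_pos zero_grid)

lemma pmf_stat_pi:
  assumes "\<epsilon> > 0" "r \<ge> 0"
  shows "pmf (stat_pi n \<epsilon> r) x = (if x \<in> grid n \<epsilon> then real (card (Gamma n \<epsilon> r x)) / ZZ n \<epsilon> r else 0)"
proof -
  let ?f = "\<lambda>x. if x \<in> grid n \<epsilon>
      then real (card (Gamma n \<epsilon> r x)) / (\<Sum>y\<in>grid n \<epsilon>. real (card (Gamma n \<epsilon> r y)))
      else 0"
  have nn: "\<And>x. 0 \<le> ?f x" by (auto intro!: divide_nonneg_nonneg sum_nonneg)
  have "(\<integral>\<^sup>+x. ennreal (?f x) \<partial>count_space UNIV) = (\<Sum>x\<in>grid n \<epsilon>. ennreal (?f x))"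
    by (rule nn_integral_count_space') (auto simp: finite_grid assms)
  also have "\<dots> = ennreal (\<Sum>x\<in>grid n \<epsilon>. ?f x)"
    by (rule sum_ennreal, rule nn)
  also have "(\<Sum>x\<in>grid n \<epsilon>. ?f x) = 1"
    using ZZ_pos[OF assms, of n] unfolding ZZ_def
    by (simp add: sum_divide_distrib[symmetric])
  finally have "(\<integral>\<^sup>+x. ennreal (?f x) \<partial>count_space UNIV) = 1" by simp
  then show ?thesis unfolding stat_pi_def ZZ_def
    using pmf_embed_pmf[of ?f, OF nn] by simp
qed

lemma set_stat_pi: "\<epsilon> > 0 \<Longrightarrow> r \<ge> 0 \<Longrightarrow> set_pmf (stat_pi n \<epsilon> r) \<subseteq> grid n \<epsilon>"
  by (auto simp: set_pmf_eq pmf_stat_pi split: if_splits)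

lemma prob_stat_pi:
  assumes "\<epsilon> > 0" "r \<ge> 0" "S \<subseteq> grid n \<epsilon>"
  shows "measure_pmf.prob (stat_pi n \<epsilon> r) S = (\<Sum>x\<in>S. real (card (Gamma n \<epsilon> r x))) / ZZ n \<epsilon> r"
proof -
  have fin: "finite S" using assms finite_grid finite_subset by blast
  show ?thesis
  proof -
    have "measure_pmf.prob (stat_pi n \<epsilon> r) S = (\<Sum>x\<in>S. pmf (stat_pi n \<epsilon> r) x)"
      by (rule measure_measure_pmf_finite[OF fin])
    also have "\<dots> = (\<Sum>x\<in>S. real (card (Gamma n \<epsilon> r x)) / ZZ n \<epsilon> r)"
      by (rule sum.cong[OF refl]) (use assms in \<open>auto simp: pmf_stat_pi\<close>)
    also have "\<dots> = (\<Sum>x\<in>S. real (card (Gamma n \<epsilon> r x))) / ZZ n \<epsilon> r"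
      by (simp add: sum_divide_distrib)
    finally show ?thesis .
  qed
qed


lemma fold_mass:
  assumes eps: "\<epsilon> > 0" and r: "r \<ge> 0"
    and gg: "\<And>x. x \<in> grid n \<epsilon> \<Longrightarrow> g x \<in> grid n \<epsilon>"
    and ne: "\<And>x y. dist (g x) (g y) \<le> dist x y"
    and fib: "\<And>w. card {x\<in>grid n \<epsilon>. g x = w} \<le> 3"
    and sub: "g ` grid n \<epsilon> \<subseteq> S" "S \<subseteq> grid n \<epsilon>"
  shows "measure_pmf.prob (stat_pi n \<epsilon> r) S \<ge> 1/9"
proof -
  define P where "P = Sigma (grid n \<epsilon>) (Gamma n \<epsilon> r)"
  define Q where "Q = Sigma S (Gamma n \<epsilon> r)"
  define G where "G = (\<lambda>(x,z). (g x, g z))"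
  have finG: "finite (grid n \<epsilon>)" using finite_grid[OF eps] .
  have finS: "finite S" using sub(2) finG finite_subset by blast
  have finP: "finite P" unfolding P_def using finG finite_Gamma[OF eps] by auto
  have finQ: "finite Q" unfolding Q_def using finS finite_Gamma[OF eps] by auto
  have GPQ: "G ` P \<subseteq> Q"
  proof
    fix w assume "w \<in> G ` P"
    then obtain x z where xz: "x \<in> grid n \<epsilon>" "z \<in> grid n \<epsilon>" "dist x z \<le> r" "w = (g x, g z)"
      unfolding P_def G_def Gamma_def by (auto simp: edist_dist)
    then show "w \<in> Q" unfolding Q_def Gamma_def using sub gg ne[of x z]
      by (auto simp: edist_dist)
  qed
  have fibP: "card (P \<inter> G -` {w}) \<le> 9" for w
  proof -
    have "P \<inter> G -` {w} \<subseteq> {x\<in>grid n \<epsilon>. g x = fst w} \<times> {x\<in>grid n \<epsilon>. g x = snd w}"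
      unfolding P_def G_def Gamma_def by auto
    then have "card (P \<inter> G -` {w}) \<le> card ({x\<in>grid n \<epsilon>. g x = fst w} \<times> {x\<in>grid n \<epsilon>. g x = snd w})"
      by (rule card_mono[rotated]) (use finG in auto)
    also have "\<dots> = card {x\<in>grid n \<epsilon>. g x = fst w} * card {x\<in>grid n \<epsilon>. g x = snd w}"
      by (rule card_cartesian_product)
    also have "\<dots> \<le> 3 * 3" by (intro mult_mono fib) auto
    finally show ?thesis by simp
  qed
  have "card P \<le> card (\<Union>w\<in>G ` P. P \<inter> G -` {w})"
    by (rule card_mono) (use finP in auto)
  also have "\<dots> \<le> (\<Sum>w\<in>G ` P. card (P \<inter> G -` {w}))"
    by (rule card_UN_le) (use finP in auto)
  also have "\<dots> \<le> (\<Sum>w\<in>G ` P. 9)" by (intro sum_mono fibP)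
  also have "\<dots> = 9 * card (G ` P)" by simp
  also have "\<dots> \<le> 9 * card Q" using card_mono[OF finQ GPQ] by simp
  finally have cPQ: "real (card P) \<le> 9 * real (card Q)" by linarith
  have ZP: "ZZ n \<epsilon> r = real (card P)"
    unfolding ZZ_def P_def using finG finite_Gamma[OF eps] by simp
  have SQ: "(\<Sum>x\<in>S. real (card (Gamma n \<epsilon> r x))) = real (card Q)"
    unfolding Q_def using finS finite_Gamma[OF eps] by simp
  have Zp: "ZZ n \<epsilon> r > 0" using ZZ_pos[OF eps r] .
  have "measure_pmf.prob (stat_pi n \<epsilon> r) S = real (card Q) / real (card P)"
    using prob_stat_pi[OF eps r sub(2)] SQ ZP by simp
  also have "\<dots> \<ge> 1/9" using cPQ Zp ZP by (simp add: field_simps)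
  finally show ?thesis .
qed


definition phi :: "real \<Rightarrow> real \<Rightarrow> real" where
  "phi a u = (if u \<le> a then u else if u \<le> 2*a then 2*a - u else u - 2*a)"

definition psi :: "nat \<Rightarrow> nat \<Rightarrow> nat" where
  "psi k i = (if i \<le> k then i else if i \<le> 2*k then 2*k - i else i - 2*k)"

lemma phi_lip: "a \<ge> 0 \<Longrightarrow> dist (phi a u) (phi a v) \<le> dist u v"
  unfolding phi_def dist_real_def by (auto simp: abs_if)

lemma phi_fib: "phi a u = w \<Longrightarrow> u \<in> {w, 2*a - w, w + 2*a}"
  unfolding phi_def by (auto split: if_splits)

lemma psi_le: "psi k i \<le> i" unfolding psi_def by auto
lemma psi_le2: "i \<le> 3*k \<Longrightarrow> psi k i \<le> k" unfolding psi_def by auto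

lemma phi_grid: assumes "\<epsilon> > 0" shows "phi (real k * \<epsilon>) (real i * \<epsilon>) = real (psi k i) * \<epsilon>"
proof -
  have e1: "real i * \<epsilon> \<le> real k * \<epsilon> \<longleftrightarrow> i \<le> k" using assms by simp
  have e2: "real i * \<epsilon> \<le> 2 * (real k * \<epsilon>) \<longleftrightarrow> i \<le> 2*k"
    using assms by (metis mult.assoc mult_le_cancel_right_pos of_nat_le_iff of_nat_mult of_nat_numeral)
  show ?thesis unfolding phi_def psi_def e1 e2
    by (auto simp: of_nat_diff algebra_simps)
qed

lemma card3: "card {a,b,c::'a} \<le> 3"
  by (simp add: card_insert_if)

lemma card_le3: "finite T \<Longrightarrow> T \<subseteq> {a,b,c} \<Longrightarrow> card T \<le> 3"
  by (meson card3 card_mono finite.emptyI finite.insertI order_trans)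

lemma dist_fold:
  assumes "\<And>u v. dist (f u) (f v) \<le> dist u v"
  shows "dist (f (fst x), snd x) (f (fst y), snd y) \<le> dist x y"
proof -
  have "dist (f (fst x), snd x) (f (fst y), snd y) = sqrt ((dist (f (fst x)) (f (fst y)))^2 + (dist (snd x) (snd y))^2)"
    by (simp add: dist_Pair_Pair)
  also have "\<dots> \<le> sqrt ((dist (fst x) (fst y))^2 + (dist (snd x) (snd y))^2)"
    by (intro real_sqrt_le_mono add_mono power_mono assms) auto
  also have "\<dots> = dist x y" by (cases x; cases y) (simp add: dist_Pair_Pair)
  finally show ?thesis .
qed

context
  fixes n :: nat and \<epsilon> r :: real
  assumes eps: "\<epsilon> > 0" and r: "r \<ge> 0" and K1: "KK n \<epsilon> \<ge> 1"
begin

definition "aa = (KK n \<epsilon> + 2) div 3"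
definition "al = real aa * \<epsilon>"
definition "LL = real (KK n \<epsilon>) * \<epsilon>"
definition "SA = {x\<in>grid n \<epsilon>. fst x \<le> al}"
definition "SB = {x\<in>grid n \<epsilon>. fst x \<ge> LL - al}"

lemma K3: "KK n \<epsilon> \<le> 3 * aa" unfolding aa_def by auto

lemma SA_mass: "measure_pmf.prob (stat_pi n \<epsilon> r) SA \<ge> 1/9"
proof (rule fold_mass[OF eps r, where g = "\<lambda>x. (phi al (fst x), snd x)"])
  fix x assume "x \<in> grid n \<epsilon>"
  then obtain i j where ij: "i \<le> KK n \<epsilon>" "j \<le> KK n \<epsilon>" "x = (real i * \<epsilon>, real j * \<epsilon>)"
    using grid_iff[OF eps] by blast
  show "(phi al (fst x), snd x) \<in> grid n \<epsilon>"
  proof -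
    have "phi al (fst x) = real (psi aa i) * \<epsilon>" using ij by (simp add: al_def phi_grid[OF eps])
    then have "psi aa i \<le> KK n \<epsilon> \<and> j \<le> KK n \<epsilon> \<and> (phi al (fst x), snd x) = (real (psi aa i) * \<epsilon>, real j * \<epsilon>)"
      using ij psi_le[of aa i] by auto
    then show ?thesis unfolding grid_iff[OF eps] by blast
  qed
next
  fix x y :: point show "dist (phi al (fst x), snd x) (phi al (fst y), snd y) \<le> dist x y"
    by (rule dist_fold) (rule phi_lip, use eps in \<open>simp add: al_def\<close>)
next
  fix w :: point
  show "card {x \<in> grid n \<epsilon>. (phi al (fst x), snd x) = w} \<le> 3"
  proof (rule card_le3)
    show "finite {x \<in> grid n \<epsilon>. (phi al (fst x), snd x) = w}" using finite_grid[OF eps] by simp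
    show "{x \<in> grid n \<epsilon>. (phi al (fst x), snd x) = w} \<subseteq> {(fst w, snd w), (2*al - fst w, snd w), (fst w + 2*al, snd w)}"
    proof
      fix x :: point assume "x \<in> {x \<in> grid n \<epsilon>. (phi al (fst x), snd x) = w}"
      then have h: "phi al (fst x) = fst w" "snd x = snd w" by auto
      then have "fst x \<in> {fst w, 2*al - fst w, fst w + 2*al}" "snd x = snd w"
        using phi_fib[OF h(1)] by auto
      then show "x \<in> {(fst w, snd w), (2*al - fst w, snd w), (fst w + 2*al, snd w)}"
        by (cases x) auto
    qed
  qed
next
  show "(\<lambda>x. (phi al (fst x), snd x)) ` grid n \<epsilon> \<subseteq> SA"
  proof
    fix y assume "y \<in> (\<lambda>x. (phi al (fst x), snd x)) ` grid n \<epsilon>"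
    then obtain i j where ij: "i \<le> KK n \<epsilon>" "j \<le> KK n \<epsilon>" "y = (phi al (real i * \<epsilon>), real j * \<epsilon>)"
      using grid_iff[OF eps] by auto
    have "psi aa i \<le> aa" using ij K3 by (intro psi_le2) linarith
    then show "y \<in> SA"
    proof -
      have "phi al (real i * \<epsilon>) = real (psi aa i) * \<epsilon>" using ij by (simp add: al_def phi_grid[OF eps])
      moreover have "real (psi aa i) * \<epsilon> \<le> al" unfolding al_def using \<open>psi aa i \<le> aa\<close> eps by simp
      moreover have "psi aa i \<le> KK n \<epsilon>" using ij psi_le[of aa i] by auto
      ultimately have "y \<in> grid n \<epsilon>" "fst y \<le> al" unfolding grid_iff[OF eps] using ij by auto
      then show ?thesis unfolding SA_def by auto
    qed
  qed
next
  show "SA \<subseteq> grid n \<epsilon>" unfolding SA_def by auto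
qed

end

lemma traj_props:
  assumes eps: "\<epsilon> > 0" and r: "r \<ge> 0"
  shows "xs \<in> set_pmf (traj n \<epsilon> r m) \<Longrightarrow> length xs = Suc m \<and> set xs \<subseteq> grid n \<epsilon> \<and>
     (\<forall>k<m. dist (xs!k) (xs!Suc k) \<le> r)"
proof (induction m arbitrary: xs)
  case 0
  then show ?case using set_stat_pi[OF eps r, of n] by auto
next
  case (Suc m)
  from Suc.prems obtain ys y where ys: "ys \<in> set_pmf (traj n \<epsilon> r m)"
     and y: "y \<in> set_pmf (step_pmf n \<epsilon> r (last ys))" and xs: "xs = ys @ [y]"
    by auto
  have IH: "length ys = Suc m" "set ys \<subseteq> grid n \<epsilon>" "\<forall>k<m. dist (ys!k) (ys!Suc k) \<le> r"
    using Suc.IH[OF ys] by auto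
  have lg: "last ys \<in> grid n \<epsilon>" proof -
    have "ys \<noteq> []" using IH(1) by auto
    then show ?thesis using IH(2) last_in_set by blast
  qed
  have G: "set_pmf (step_pmf n \<epsilon> r (last ys)) = Gamma n \<epsilon> r (last ys)"
    unfolding step_pmf_def
    by (rule set_pmf_of_set) (use self_Gamma[OF r lg] finite_Gamma[OF eps] in auto)
  have yg: "y \<in> grid n \<epsilon>" "dist (last ys) y \<le> r" using y G by (auto simp: Gamma_def edist_dist)
  have lastn: "last ys = ys ! m" using IH(1) last_conv_nth[of ys] by (cases ys) auto
  have "\<forall>k<Suc m. dist (xs!k) (xs!Suc k) \<le> r"
  proof (intro allI impI)
    fix k assume k: "k < Suc m"
    show "dist (xs!k) (xs!Suc k) \<le> r"
    proof (cases "k < m")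
      case True
      then show ?thesis using IH k xs by (simp add: nth_append)
    next
      case False
      then have "k = m" using k by simp
      then show ?thesis using IH xs yg lastn by (simp add: nth_append)
    qed
  qed
  then show ?case using IH xs yg by auto
qed

lemma traj_hd:
  assumes eps: "\<epsilon> > 0" and r: "r \<ge> 0"
  shows "map_pmf (\<lambda>xs. xs!0) (traj n \<epsilon> r m) = stat_pi n \<epsilon> r"
proof (induction m)
  case 0
  then show ?case by (simp add: pmf.map_comp o_def)
next
  case (Suc m)
  have "map_pmf (\<lambda>xs. xs!0) (traj n \<epsilon> r (Suc m)) =
     bind_pmf (traj n \<epsilon> r m) (\<lambda>xs. map_pmf (\<lambda>xs. xs!0) (map_pmf (\<lambda>y. xs @ [y]) (step_pmf n \<epsilon> r (last xs))))"
    by (simp add: map_bind_pmf)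
  also have "\<dots> = bind_pmf (traj n \<epsilon> r m) (\<lambda>xs. return_pmf (xs!0))"
  proof (rule bind_pmf_cong[OF refl])
    fix xs assume "xs \<in> set_pmf (traj n \<epsilon> r m)"
    then have "length xs = Suc m" using traj_props[OF eps r] by blast
    then have "(\<lambda>y. (xs @ [y]) ! 0) = (\<lambda>_. xs ! 0)" by (auto simp: nth_append)
    then show "map_pmf (\<lambda>xs. xs!0) (map_pmf (\<lambda>y. xs @ [y]) (step_pmf n \<epsilon> r (last xs))) = return_pmf (xs!0)"
      by (simp add: pmf.map_comp o_def)
  qed
  also have "\<dots> = map_pmf (\<lambda>xs. xs!0) (traj n \<epsilon> r m)" by (simp add: map_pmf_def)
  finally show ?case using Suc by simp
qed

lemma flood_sub: "flood_set n R pos s t \<subseteq> insert s {..<n}"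
  by (induction t) auto

lemma move_dist:
  assumes mv: "\<And>i t. i < n \<Longrightarrow> dist (pos i (Suc t)) (pos i t) \<le> r" and "i < n"
  shows "dist (pos i t) (pos i 0) \<le> real t * r"
proof (induction t)
  case 0 then show ?case by simp
next
  case (Suc t)
  have "dist (pos i (Suc t)) (pos i 0) \<le> dist (pos i (Suc t)) (pos i t) + dist (pos i t) (pos i 0)"
    by (rule dist_triangle)
  also have "\<dots> \<le> r + real t * r" using mv[OF assms(2)] Suc by (intro add_mono) auto
  finally show ?case by (simp add: algebra_simps)
qed

lemma flood_dist:
  assumes mv: "\<And>i t. i < n \<Longrightarrow> dist (pos i (Suc t)) (pos i t) \<le> r" and r: "r \<ge> 0" and R: "R \<ge> 0" and s: "s < n"
  shows "\<forall>j\<in>flood_set n R pos s t. dist (pos j t) (pos s 0) \<le> real t * (R + r)"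
proof (induction t)
  case 0 then show ?case by simp
next
  case (Suc t)
  show ?case
  proof
    fix j assume j: "j \<in> flood_set n R pos s (Suc t)"
    have jn: "j < n" using flood_sub[of n R pos s "Suc t"] j s by auto
    have mvj: "dist (pos j (Suc t)) (pos j t) \<le> r" using mv[OF jn] .
    show "dist (pos j (Suc t)) (pos s 0) \<le> real (Suc t) * (R + r)"
    proof (cases "j \<in> flood_set n R pos s t")
      case True
      have "dist (pos j (Suc t)) (pos s 0) \<le> dist (pos j (Suc t)) (pos j t) + dist (pos j t) (pos s 0)"
        by (rule dist_triangle)
      also have "\<dots> \<le> r + real t * (R + r)" using mvj Suc True by (intro add_mono) auto
      finally show ?thesis
        using \<open>R \<ge> 0\<close> by (simp add: algebra_simps)
    next
      case False
      then obtain i where i: "i \<in> flood_set n R pos s t" "adj R pos t i j" using j by auto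
      have ij: "dist (pos i t) (pos j t) \<le> R" using i(2) by (simp add: adj_def edist_dist)
      have "dist (pos j (Suc t)) (pos s 0) \<le> dist (pos j (Suc t)) (pos j t) + dist (pos j t) (pos s 0)"
        by (rule dist_triangle)
      moreover have "dist (pos j t) (pos s 0) \<le> dist (pos j t) (pos i t) + dist (pos i t) (pos s 0)"
        by (rule dist_triangle)
      ultimately have "dist (pos j (Suc t)) (pos s 0) \<le> dist (pos j (Suc t)) (pos j t) + (dist (pos j t) (pos i t) + dist (pos i t) (pos s 0))"
        by linarith
      also have "\<dots> \<le> r + (R + real t * (R + r))" using mvj ij Suc i(1)
        by (intro add_mono) (auto simp: dist_commute)
      finally show ?thesis by (simp add: algebra_simps)
    qed
  qed
qed

lemma flood_lb:
  assumes mv: "\<And>i t. i < n \<Longrightarrow> dist (pos i (Suc t)) (pos i t) \<le> r" and r: "r \<ge> 0"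
    and a: "a < n" and b: "b < n" and Rr: "R + r > 0" and R: "R \<ge> 0"
    and D: "D \<le> dist (pos b 0) (pos a 0)"
  shows "ereal (D / (2 * (R + r))) \<le> ereal_of_enat (flooding_time n R pos)"
proof -
  have key: "D / (2 * (R + r)) \<le> real t" if t: "flood_set n R pos a t = {..<n}" for t
  proof -
    have "b \<in> flood_set n R pos a t" using t b by simp
    then have "dist (pos b t) (pos a 0) \<le> real t * (R + r)" using flood_dist[where pos=pos and n=n and r=r and R=R and s=a, OF mv r R a] by blast
    moreover have "dist (pos b t) (pos b 0) \<le> real t * r" using move_dist[where pos=pos and n=n and r=r and i=b, OF mv b] by blast
    moreover have "dist (pos b 0) (pos a 0) \<le> dist (pos b t) (pos b 0) + dist (pos b t) (pos a 0)"
      by (rule dist_triangle3)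
    ultimately have "D \<le> real t * r + real t * (R + r)" using D by linarith
    also have "\<dots> \<le> 2 * real t * (R + r)" using r Rr R by (simp add: algebra_simps)
    finally show ?thesis using Rr by (simp add: field_simps)
  qed
  have "ereal (D / (2 * (R + r))) \<le> ereal_of_enat (flood_time_from n R pos a)"
  proof (cases "\<exists>t. flood_set n R pos a t = {..<n}")
    case True
    then have "flood_set n R pos a (LEAST t. flood_set n R pos a t = {..<n}) = {..<n}"
      by (rule LeastI_ex)
    then show ?thesis using True key unfolding flood_time_from_def by simp
  next
    case False
    then show ?thesis unfolding flood_time_from_def by simp
  qed
  also have "\<dots> \<le> ereal_of_enat (flooding_time n R pos)"
    unfolding flooding_time_def ereal_of_enat_le_iff using a by (intro SUP_upper) auto
  finally show ?thesis .
qed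


lemma SB_mass:
  assumes eps: "\<epsilon> > 0" and r: "r \<ge> 0" and K1: "KK n \<epsilon> \<ge> 1"
  shows "measure_pmf.prob (stat_pi n \<epsilon> r) (SB n \<epsilon>) \<ge> 1/9"
proof -
  define a where "a = aa n \<epsilon>"
  define K where "K = KK n \<epsilon>"
  define f where "f = (\<lambda>u. LL n \<epsilon> - phi (al n \<epsilon>) (LL n \<epsilon> - u))"
  have K3: "K \<le> 3 * a" unfolding K_def a_def using K3[OF eps r K1] .
  have fg: "f (real i * \<epsilon>) = real (K - psi a (K - i)) * \<epsilon>" if "i \<le> K" for i
  proof -
    have "LL n \<epsilon> - real i * \<epsilon> = real (K - i) * \<epsilon>" using that unfolding LL_def[OF eps r K1] K_def
      by (simp add: of_nat_diff algebra_simps)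
    moreover have "psi a (K - i) \<le> K" using psi_le[of a "K - i"] by simp
    ultimately show ?thesis unfolding f_def al_def[OF eps r K1] a_def[symmetric] LL_def[OF eps r K1] K_def[symmetric]
      using phi_grid[OF eps] by (simp add: of_nat_diff algebra_simps)
  qed
  show ?thesis
  proof (rule fold_mass[OF eps r, where g = "\<lambda>x. (f (fst x), snd x)"])
    fix x assume "x \<in> grid n \<epsilon>"
    then obtain i j where ij: "i \<le> K" "j \<le> K" "x = (real i * \<epsilon>, real j * \<epsilon>)"
      using grid_iff[OF eps] unfolding K_def by blast
    have "K - psi a (K - i) \<le> K \<and> j \<le> K \<and> (f (fst x), snd x) = (real (K - psi a (K - i)) * \<epsilon>, real j * \<epsilon>)"
      using ij fg[OF ij(1)] by auto
    then show "(f (fst x), snd x) \<in> grid n \<epsilon>"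
      unfolding grid_iff[OF eps] K_def[symmetric] by blast
  next
    fix x y :: point show "dist (f (fst x), snd x) (f (fst y), snd y) \<le> dist x y"
    proof (rule dist_fold)
      fix u v
      have "dist (f u) (f v) = dist (phi (al n \<epsilon>) (LL n \<epsilon> - u)) (phi (al n \<epsilon>) (LL n \<epsilon> - v))"
        unfolding f_def dist_real_def by (simp add: abs_minus_commute)
      also have "\<dots> \<le> dist (LL n \<epsilon> - u) (LL n \<epsilon> - v)" by (rule phi_lip) (use eps in \<open>simp add: al_def[OF eps r K1]\<close>)
      also have "\<dots> = dist u v" unfolding dist_real_def by (simp add: abs_minus_commute)
      finally show "dist (f u) (f v) \<le> dist u v" .
    qed
  next
    fix w :: point
    show "card {x \<in> grid n \<epsilon>. (f (fst x), snd x) = w} \<le> 3"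
    proof (rule card_le3)
      show "finite {x \<in> grid n \<epsilon>. (f (fst x), snd x) = w}" using finite_grid[OF eps] by simp
      have "u \<in> {fst w, 2*LL n \<epsilon> - 2*al n \<epsilon> - fst w, fst w - 2*al n \<epsilon>}" if "f u = fst w" for u
      proof -
        have "phi (al n \<epsilon>) (LL n \<epsilon> - u) = LL n \<epsilon> - fst w" using that unfolding f_def by simp
        from phi_fib[OF this] show ?thesis by auto
      qed
      then show "{x \<in> grid n \<epsilon>. (f (fst x), snd x) = w} \<subseteq>
         {(fst w, snd w), (2*LL n \<epsilon> - 2*al n \<epsilon> - fst w, snd w), (fst w - 2*al n \<epsilon>, snd w)}"
        by fastforce
    qed
  next
    show "(\<lambda>x. (f (fst x), snd x)) ` grid n \<epsilon> \<subseteq> SB n \<epsilon>"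
    proof
      fix y assume "y \<in> (\<lambda>x. (f (fst x), snd x)) ` grid n \<epsilon>"
      then obtain i j where ij: "i \<le> K" "j \<le> K" "y = (f (real i * \<epsilon>), real j * \<epsilon>)"
        using grid_iff[OF eps] unfolding K_def by auto
      have p: "psi a (K - i) \<le> a" using psi_le2 K3 by (metis diff_le_self le_trans)
      have pk: "psi a (K - i) \<le> K" using psi_le[of a "K - i"] by simp
      have "real (K - psi a (K - i)) * \<epsilon> \<ge> LL n \<epsilon> - al n \<epsilon>"
        unfolding LL_def[OF eps r K1] al_def[OF eps r K1] K_def[symmetric] a_def[symmetric] using p pk eps
        by (simp add: of_nat_diff algebra_simps)
      moreover have yeq: "y = (real (K - psi a (K - i)) * \<epsilon>, real j * \<epsilon>)"
        using ij fg[OF ij(1)] by auto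
      ultimately have "fst y \<ge> LL n \<epsilon> - al n \<epsilon>" by simp
      moreover have "y \<in> grid n \<epsilon>"
      proof -
        have "K - psi a (K - i) \<le> K" by simp
        then have "\<exists>i' j'. i' \<le> K \<and> j' \<le> K \<and> y = (real i' * \<epsilon>, real j' * \<epsilon>)"
          using yeq ij(2) by blast
        then show ?thesis unfolding grid_iff[OF eps] K_def by blast
      qed
      ultimately have "y \<in> grid n \<epsilon>" "fst y \<ge> LL n \<epsilon> - al n \<epsilon>" by auto
      then show "y \<in> SB n \<epsilon>" unfolding SB_def[OF eps r K1] by auto
    qed
  next
    show "SB n \<epsilon> \<subseteq> grid n \<epsilon>" unfolding SB_def[OF eps r K1] by auto
  qed
qed


lemma ev_N: "\<exists>N::nat. \<forall>n\<ge>N. 100 \<le> n \<and> 2 * real n * (8/9)^n \<le> 1"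
proof -
  have "(\<lambda>n. of_nat n * (8/9::real) ^ n) \<longlonglongrightarrow> 0"
    by (rule powser_times_n_limit_0) simp
  then have "eventually (\<lambda>n. real n * (8/9::real) ^ n < 1/2) sequentially"
    by (rule order_tendstoD(2)) simp
  moreover have "eventually (\<lambda>n::nat. 100 \<le> n) sequentially"
    by (rule eventually_ge_at_top)
  ultimately have "eventually (\<lambda>n::nat. 100 \<le> n \<and> 2 * real n * (8/9)^n \<le> 1) sequentially"
    by eventually_elim auto
  then show ?thesis by (simp add: eventually_at_top_linorder)
qed

lemma K_ge:
  assumes eps: "\<epsilon> > 0" "\<epsilon> \<le> 1" and n: "100 \<le> n"
  shows "KK n \<epsilon> \<ge> 1" "real (KK n \<epsilon>) * \<epsilon> \<ge> sqrt (real n) - \<epsilon>"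
proof -
  have s10: "sqrt (real n) \<ge> 10"
    using n real_sqrt_le_mono[of 100 "real n"] by simp
  have "sqrt (real n) * \<epsilon> \<le> sqrt (real n) * 1"
    using eps by (intro mult_left_mono) auto
  then have q: "sqrt (real n) / \<epsilon> \<ge> sqrt (real n)" using eps
    by (simp add: le_divide_eq)
  have fl: "real_of_int \<lfloor>sqrt (real n) / \<epsilon>\<rfloor> > sqrt (real n) / \<epsilon> - 1"
    by linarith
  have fl0: "\<lfloor>sqrt (real n) / \<epsilon>\<rfloor> \<ge> 0" using eps by simp
  have KR: "real (KK n \<epsilon>) = real_of_int \<lfloor>sqrt (real n) / \<epsilon>\<rfloor>"
    unfolding KK_def using fl0 by simp
  show "KK n \<epsilon> \<ge> 1" using KR fl q s10 by linarith
  have "real (KK n \<epsilon>) * \<epsilon> \<ge> (sqrt (real n) / \<epsilon> - 1) * \<epsilon>"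
    using KR fl eps by (intro mult_right_mono) auto
  moreover have "(sqrt (real n) / \<epsilon> - 1) * \<epsilon> = sqrt (real n) - \<epsilon>" using eps
    by (simp add: field_simps)
  ultimately show "real (KK n \<epsilon>) * \<epsilon> \<ge> sqrt (real n) - \<epsilon>" by simp
qed

lemma sep:
  assumes eps: "\<epsilon> > 0" "\<epsilon> \<le> 1" and r: "(r::real) \<ge> 0" and n: "100 \<le> n"
    and x: "x \<in> SA n \<epsilon>" and y: "y \<in> SB n \<epsilon>"
  shows "dist y x \<ge> sqrt (real n) / 6"
proof -
  note K = K_ge[OF eps n]
  have s10: "sqrt (real n) \<ge> 10"
    using n real_sqrt_le_mono[of 100 "real n"] by simp
  have fx: "fst x \<le> al n \<epsilon>" using x unfolding SA_def[OF eps(1) r K(1)] by auto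
  have fy: "fst y \<ge> LL n \<epsilon> - al n \<epsilon>" using y unfolding SB_def[OF eps(1) r K(1)] by auto
  have a3: "3 * aa n \<epsilon> \<le> KK n \<epsilon> + 2" unfolding aa_def[OF eps(1) r K(1)] by simp
  then have a3r: "3 * real (aa n \<epsilon>) \<le> real (KK n \<epsilon>) + 2" by linarith
  have "LL n \<epsilon> - 2 * al n \<epsilon> = (real (KK n \<epsilon>) - 2 * real (aa n \<epsilon>)) * \<epsilon>"
    unfolding LL_def[OF eps(1) r K(1)] al_def[OF eps(1) r K(1)] by (simp add: algebra_simps)
  also have "\<dots> \<ge> ((real (KK n \<epsilon>) - 4) / 3) * \<epsilon>"
    using a3r eps by (intro mult_right_mono) auto
  finally have "LL n \<epsilon> - 2 * al n \<epsilon> \<ge> (real (KK n \<epsilon>) * \<epsilon> - 4 * \<epsilon>) / 3"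
    by (simp add: field_simps)
  moreover have "(real (KK n \<epsilon>) * \<epsilon> - 4 * \<epsilon>) / 3 \<ge> sqrt (real n) / 6"
  proof -
    define X where "X = real (KK n \<epsilon>) * \<epsilon>"
    have "X \<ge> sqrt (real n) - \<epsilon>" using K(2) unfolding X_def .
    then have h: "X - 4 * \<epsilon> \<ge> sqrt (real n) / 2" using eps s10 by linarith
    have "(X - 4 * \<epsilon>) / 3 \<ge> (sqrt (real n) / 2) / 3"
      by (rule divide_right_mono[OF h]) simp
    then have "(X - 4 * \<epsilon>) / 3 \<ge> sqrt (real n) / 6" by simp
    then show ?thesis unfolding X_def .
  qed
  ultimately have "LL n \<epsilon> - 2 * al n \<epsilon> \<ge> sqrt (real n) / 6" by linarith
  then have "fst y - fst x \<ge> sqrt (real n) / 6" using fx fy by linarith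
  moreover have "dist (fst y) (fst x) \<le> dist y x" by (rule dist_fst_le)
  ultimately show ?thesis unfolding dist_real_def by linarith
qed


lemma prob_none:
  assumes eps: "\<epsilon> > 0" and r: "r \<ge> 0" and S: "measure_pmf.prob (stat_pi n \<epsilon> r) S \<ge> 1/9"
  shows "measure_pmf.prob (meg_pmf n \<epsilon> r m) {\<omega>. \<forall>i<n. \<omega> i ! 0 \<notin> S} \<le> (8/9)^n"
proof -
  let ?M = "meg_pmf n \<epsilon> r m"
  define C where "C = {xs :: point list. xs ! 0 \<notin> S}"
  have set: "set_pmf ?M \<subseteq> {f. \<forall>x. x \<notin> {..<n} \<longrightarrow> f x = []}"
    unfolding meg_pmf_def by (rule set_Pi_pmf_subset) simp
  have eq: "{\<omega>. \<forall>i<n. \<omega> i ! 0 \<notin> S} \<inter> set_pmf ?M = PiE_dflt {..<n} [] (\<lambda>_. C) \<inter> set_pmf ?M"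
    using set unfolding PiE_dflt_def C_def by auto
  have "measure_pmf.prob ?M {\<omega>. \<forall>i<n. \<omega> i ! 0 \<notin> S} = measure_pmf.prob ?M ({\<omega>. \<forall>i<n. \<omega> i ! 0 \<notin> S} \<inter> set_pmf ?M)"
    by (simp add: measure_Int_set_pmf)
  also have "\<dots> = measure_pmf.prob ?M (PiE_dflt {..<n} [] (\<lambda>_. C) \<inter> set_pmf ?M)" using eq by simp
  also have "\<dots> = measure_pmf.prob ?M (PiE_dflt {..<n} [] (\<lambda>_. C))" by (simp add: measure_Int_set_pmf)
  also have "\<dots> = (\<Prod>i<n. measure_pmf.prob (traj n \<epsilon> r m) C)"
    unfolding meg_pmf_def by (rule measure_Pi_pmf_PiE_dflt) simp
  also have "measure_pmf.prob (traj n \<epsilon> r m) C = measure_pmf.prob (map_pmf (\<lambda>xs. xs!0) (traj n \<epsilon> r m)) (UNIV - S)"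
    unfolding C_def by (simp add: vimage_def)
  also have "\<dots> = measure_pmf.prob (stat_pi n \<epsilon> r) (UNIV - S)" by (simp only: traj_hd[OF eps r])
  also have "\<dots> = 1 - measure_pmf.prob (stat_pi n \<epsilon> r) S"
    using measure_pmf.prob_compl[of S "stat_pi n \<epsilon> r"] by simp
  also have "(\<Prod>i<n. 1 - measure_pmf.prob (stat_pi n \<epsilon> r) S) = (1 - measure_pmf.prob (stat_pi n \<epsilon> r) S) ^ n"
    by simp
  also have "\<dots> \<le> (8/9)^n"
    using S measure_pmf.prob_le_1[of "stat_pi n \<epsilon> r" S] by (intro power_mono) auto
  finally show ?thesis .
qed

theorem mainTheorem9:
  "\<exists>c>0. \<exists>N::nat. \<forall>n\<ge>N. \<forall>r \<epsilon> R :: real.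
     r \<ge> 0 \<longrightarrow> 0 < \<epsilon> \<longrightarrow> \<epsilon> \<le> 1 \<longrightarrow> R > \<epsilon> \<longrightarrow>
     (\<forall>m::nat. real m \<ge> c * sqrt (real n) / (R + r) \<longrightarrow>
        measure_pmf.prob (meg_pmf n \<epsilon> r m)
          {\<omega>. ereal (c * sqrt (real n) / (R + r))
                 \<le> ereal_of_enat (flooding_time n R (positions m \<omega>))}
        \<ge> 1 - 1 / real n)"
proof -
  obtain N :: nat where N: "\<And>n. n \<ge> N \<Longrightarrow> 100 \<le> n \<and> 2 * real n * (8/9)^n \<le> 1"
    using ev_N by blast
  have "\<forall>n\<ge>N. \<forall>r \<epsilon> R :: real.
     r \<ge> 0 \<longrightarrow> 0 < \<epsilon> \<longrightarrow> \<epsilon> \<le> 1 \<longrightarrow> R > \<epsilon> \<longrightarrow>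
     (\<forall>m::nat. real m \<ge> (1/12) * sqrt (real n) / (R + r) \<longrightarrow>
        measure_pmf.prob (meg_pmf n \<epsilon> r m)
          {\<omega>. ereal ((1/12) * sqrt (real n) / (R + r))
                 \<le> ereal_of_enat (flooding_time n R (positions m \<omega>))}
        \<ge> 1 - 1 / real n)"
  proof (intro allI impI)
    fix n :: nat and r \<epsilon> R :: real and m :: nat
    assume n: "n \<ge> N" and r: "r \<ge> 0" and eps: "0 < \<epsilon>" "\<epsilon> \<le> 1" and R: "R > \<epsilon>"
    have n100: "100 \<le> n" and nbound: "2 * real n * (8/9)^n \<le> 1" using N[OF n] by auto
    note K = K_ge[OF eps n100]
    let ?M = "meg_pmf n \<epsilon> r m"
    let ?G = "{\<omega>. ereal ((1/12) * sqrt (real n) / (R + r))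
                 \<le> ereal_of_enat (flooding_time n R (positions m \<omega>))}"
    define EA where "EA = {\<omega>::nat \<Rightarrow> point list. \<exists>i<n. \<omega> i ! 0 \<in> SA n \<epsilon>}"
    define EB where "EB = {\<omega>::nat \<Rightarrow> point list. \<exists>i<n. \<omega> i ! 0 \<in> SB n \<epsilon>}"
    have pA: "measure_pmf.prob ?M (UNIV - EA) \<le> (8/9)^n"
    proof -
      have "UNIV - EA = {\<omega>. \<forall>i<n. \<omega> i ! 0 \<notin> SA n \<epsilon>}" unfolding EA_def by auto
      then show ?thesis using prob_none[OF eps(1) r SA_mass[OF eps(1) r K(1)]] by simp
    qed
    have pB: "measure_pmf.prob ?M (UNIV - EB) \<le> (8/9)^n"
    proof -
      have "UNIV - EB = {\<omega>. \<forall>i<n. \<omega> i ! 0 \<notin> SB n \<epsilon>}" unfolding EB_def by auto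
      then show ?thesis using prob_none[OF eps(1) r SB_mass[OF eps(1) r K(1)]] by simp
    qed
    have sub: "EA \<inter> EB \<inter> set_pmf ?M \<subseteq> ?G"
    proof
      fix \<omega> assume w: "\<omega> \<in> EA \<inter> EB \<inter> set_pmf ?M"
      then obtain a b where a: "a < n" "\<omega> a ! 0 \<in> SA n \<epsilon>" and b: "b < n" "\<omega> b ! 0 \<in> SB n \<epsilon>"
        unfolding EA_def EB_def by auto
      have tr: "\<omega> i \<in> set_pmf (traj n \<epsilon> r m)" if "i < n" for i
        using w that unfolding meg_pmf_def set_Pi_pmf[OF finite_lessThan] PiE_dflt_def by auto
      have mv: "dist (positions m \<omega> i (Suc t)) (positions m \<omega> i t) \<le> r" if i: "i < n" for i t
      proof (cases "t < m")
        case True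
        have "dist (\<omega> i ! t) (\<omega> i ! Suc t) \<le> r" using traj_props[OF eps(1) r tr[OF i]] True by blast
        then show ?thesis using True unfolding positions_def by (simp add: dist_commute)
      next
        case False
        then show ?thesis using r unfolding positions_def by simp
      qed
      have D: "sqrt (real n) / 6 \<le> dist (positions m \<omega> b 0) (positions m \<omega> a 0)"
        using sep[OF eps r n100 a(2) b(2)] unfolding positions_def by simp
      have Rr: "R + r > 0" using R eps r by linarith
      have "ereal ((sqrt (real n) / 6) / (2 * (R + r))) \<le> ereal_of_enat (flooding_time n R (positions m \<omega>))"
        by (rule flood_lb[where pos = "positions m \<omega>" and n = n and r = r, OF mv r a(1) b(1) Rr _ D])
           (use R eps in auto)
      moreover have "(sqrt (real n) / 6) / (2 * (R + r)) = (1/12) * sqrt (real n) / (R + r)"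
        by simp
      ultimately show "\<omega> \<in> ?G" by simp
    qed
    have "measure_pmf.prob ?M (EA \<inter> EB) = measure_pmf.prob ?M (EA \<inter> EB \<inter> set_pmf ?M)"
      by (simp add: measure_Int_set_pmf)
    also have "\<dots> \<le> measure_pmf.prob ?M ?G"
      by (rule measure_pmf.finite_measure_mono[OF sub]) simp
    finally have G1: "measure_pmf.prob ?M (EA \<inter> EB) \<le> measure_pmf.prob ?M ?G" .
    have "measure_pmf.prob ?M (UNIV - (EA \<inter> EB)) \<le> measure_pmf.prob ?M ((UNIV - EA) \<union> (UNIV - EB))"
      by (rule measure_pmf.finite_measure_mono) auto
    also have "\<dots> \<le> measure_pmf.prob ?M (UNIV - EA) + measure_pmf.prob ?M (UNIV - EB)"
      by (rule measure_Un_le) auto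
    finally have "measure_pmf.prob ?M (UNIV - (EA \<inter> EB)) \<le> 2 * (8/9)^n" using pA pB by linarith
    moreover have "measure_pmf.prob ?M (UNIV - (EA \<inter> EB)) = 1 - measure_pmf.prob ?M (EA \<inter> EB)"
      using measure_pmf.prob_compl[of "EA \<inter> EB" ?M] by simp
    moreover have "2 * (8/9::real)^n \<le> 1 / real n"
      using nbound n100 by (simp add: field_simps)
    ultimately show "measure_pmf.prob ?M ?G \<ge> 1 - 1 / real n" using G1 by linarith
  qed
  then show ?thesis by (intro exI[of _ "1/12"]) auto
qed

end
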